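(* Let the setting, algorithm and notation be as described in the context. For $(x,y,z)\in\mathcal X\times\mathcal Y\times\mathcal Z$ and $k\ge0$ write \[ \Gamma_{k}(x,y,z):=\big(p(x^{k+1})+q(y^{k+1})\big)-\big(p(x)+q(y)\big)+\langle x^{k+1}-x,\nabla f(x)+Az\rangle+\langle y^{k+1}-y,\nabla g(y)+Bz\rangle+\langle\tilde z^{k+1}-z,-(A^*x+B^*y-c)\rangle . \] (a) For every $k\ge0$ and $(x,y,z)\in\mathcal X\times\mathcal Y\times\mathcal Z$, \[ \Gamma_k(x,y,z)+\tfrac12\big(\phi_{k+1}(x,y,z)-\phi_k(x,y,z)\big)\le-\tfrac12\Big(s_{k+1}+(1-\tau)\sigma\|r^{k+1}\|^2+\sigma\|A^*x^{k+1}+B^*y^k-c\|^2\Big). \] (b) Assume moreover $\frac12\widehat\Sigma_g+T\succeq0$. Then for every $\alpha\in(0,1]$, every $k\ge1$ and every $(x,y,z)\in\mathcal X\times\mathcal Y\times\mathcal Z$, with $\kappa:=1-\alpha\min(\tau,\tau^{-1})$, \[ \Gamma_k(x,y,z)+\tfrac12\Big\{\big[\phi_{k+1}(x,y,z)+\kappa\sigma\|r^{k+1}\|^2+\alpha\xi_{k+1}\big]-\big[\phi_k(x,y,z)+\kappa\sigma\|r^k\|^2+\alpha\xi_k\big]\Big\}\le-\tfrac12\Big\{t_{k+1}+\big[-\tau+\alpha\min(1+\tau,1+\tau^{-1})\big]\sigma\|r^{k+1}\|^2\Big\}, \] where $t_{k+1}$ is defined with this $\alpha$.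
   Context: Let $\mathcal X,\mathcal Y,\mathcal Z$ be finite-dimensional real Euclidean spaces with inner products $\langle\cdot,\cdot\rangle$ and induced norms $\|\cdot\|$. Let $p:\mathcal X\to(-\infty,+\infty]$ and $q:\mathcal Y\to(-\infty,+\infty]$ be closed proper convex functions, and let $f:\mathcal X\to\mathbb R$, $g:\mathcal Y\to\mathbb R$ be convex differentiable functions with Lipschitz continuous gradients. Let $A:\mathcal Z\to\mathcal X$, $B:\mathcal Z\to\mathcal Y$ be linear maps with adjoints $A^*,B^*$, and $c\in\mathcal Z$. Let $\Sigma_f,\widehat\Sigma_f$ (on $\mathcal X$) and $\Sigma_g,\widehat\Sigma_g$ (on $\mathcal Y$) be self-adjoint positive semidefinite linear operators with $\widehat\Sigma_f\succeq\Sigma_f$, $\widehat\Sigma_g\succeq\Sigma_g$, such that for all $x,x'\in\mathcal X$, $y,y'\in\mathcal Y$: $f(x')+\langle x-x',\nabla f(x')\rangle+\frac12\|x-x'\|^2_{\Sigma_f}\le f(x)\le f(x')+\langle x-x',\nabla f(x')\rangle+\frac12\|x-x'\|^2_{\widehat\Sigma_f}$ and the analogous two inequalities for $g$ with $\Sigma_g,\widehat\Sigma_g$. For a self-adjoint (possibly indefinite) operator $G$, $\|u\|_G^2:=\langle u,Gu\rangle$. Algorithm (Majorized iPADMM): let $\sigma>0$, $\tau>0$, and let $S:\mathcal X\to\mathcal X$, $T:\mathcal Y\to\mathcal Y$ be self-adjoint, possibly indefinite, linear operators with $\widehat\Sigma_f+S+\sigma AA^*\succeq0$ and $\widehat\Sigma_g+T+\sigma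 BB^*\succeq0$. Starting from $(x^0,y^0,z^0)\in\mathrm{dom}(p)\times\mathrm{dom}(q)\times\mathcal Z$, for $k=0,1,\dots$: $x^{k+1}\in\arg\min_{x}\{p(x)+\langle\nabla f(x^k),x\rangle+\frac12\|x-x^k\|^2_{\widehat\Sigma_f+S}+\langle z^k,A^*x\rangle+\frac\sigma2\|A^*x+B^*y^k-c\|^2\}$, $y^{k+1}\in\arg\min_{y}\{q(y)+\langle\nabla g(y^k),y\rangle+\frac12\|y-y^k\|^2_{\widehat\Sigma_g+T}+\langle z^k,B^*y\rangle+\frac\sigma2\|A^*x^{k+1}+B^*y-c\|^2\}$, $z^{k+1}=z^k+\tau\sigma(A^*x^{k+1}+B^*y^{k+1}-c)$ (the minimizers are assumed to exist). Notation: $r^k:=A^*x^k+B^*y^k-c$, $\tilde z^{k+1}:=z^k+\sigma r^{k+1}$; for $\alpha\in(0,1]$, $H_f:=\frac12\Sigma_f+S+\frac12(1-\alpha)\sigma AA^*$ and $M_g:=\frac12\Sigma_g+T+\min(\tau,1+\tau-\tau^2)\alpha\sigma BB^*$; $\phi_k(x,y,z):=(\tau\sigma)^{-1}\|z^k-z\|^2+\|x^k-x\|^2_{\widehat\Sigma_f+S}+\|y^k-y\|^2_{\widehat\Sigma_g+T}+\sigma\|A^*x+B^*y^k-c\|^2$; $\xi_{k+1}:=\|y^{k+1}-y^k\|^2_{\widehat\Sigma_g+T}$; $s_{k+1}:=\|x^{k+1}-x^k\|^2_{\frac12\Sigma_f+S}+\|y^{k+1}-y^k\|^2_{\frac12\Sigma_g+T}$;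 $t_{k+1}:=\|x^{k+1}-x^k\|^2_{H_f}+\|y^{k+1}-y^k\|^2_{M_g}$. *)

theory Defs
  imports "HOL-Analysis.Analysis"
begin

definition qf :: "('a::real_inner \<Rightarrow> 'a) \<Rightarrow> 'a \<Rightarrow> real" where
  "qf G u = u \<bullet> G u"

definition self_adjoint_op :: "('a::real_inner \<Rightarrow> 'a) \<Rightarrow> bool" where
  "self_adjoint_op G \<longleftrightarrow> linear G \<and> (\<forall>u v. G u \<bullet> v = u \<bullet> G v)"

definition psd_op :: "('a::real_inner \<Rightarrow> 'a) \<Rightarrow> bool" where
  "psd_op G \<longleftrightarrow> (\<forall>u. 0 \<le> u \<bullet> G u)"

definition epi :: "('a \<Rightarrow> ereal) \<Rightarrow> ('a \<times> real) set" where
  "epi p = {(x, t). p x \<le> ereal t}"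

definition closed_proper_convex :: "('a::euclidean_space \<Rightarrow> ereal) \<Rightarrow> bool" where
  "closed_proper_convex p \<longleftrightarrow>
     (\<forall>x. p x \<noteq> -\<infinity>) \<and> (\<exists>x. p x \<noteq> \<infinity>) \<and> convex (epi p) \<and> closed (epi p)"

end

theory Submission
  imports Defs
begin


lemma sa_lin: "self_adjoint_op G \<Longrightarrow> linear G" by (simp add: self_adjoint_op_def)
lemma sa_swap1: "self_adjoint_op G \<Longrightarrow> u \<bullet> G v = G u \<bullet> v" by (simp add: self_adjoint_op_def)
lemma sa_swap2: "self_adjoint_op G \<Longrightarrow> G u \<bullet> v = G v \<bullet> u"
  by (metis inner_commute sa_swap1)

lemma qf_alt: "qf G u = G u \<bullet> u" by (simp add: qf_def inner_commute)

lemma Gdiff: "self_adjoint_op G \<Longrightarrow> G (u - v) = G u - G v"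
  using sa_lin linear_diff by blast

lemma qf_diff:
  assumes G: "self_adjoint_op G"
  shows "qf G (u - v) = qf G u + qf G v - 2 * (G u \<bullet> v)"
proof -
  have "qf G (u - v) = G u \<bullet> u - G u \<bullet> v - G v \<bullet> u + G v \<bullet> v"
    by (simp add: qf_alt Gdiff[OF G] inner_diff_left inner_diff_right)
  moreover have "G v \<bullet> u = G u \<bullet> v" using sa_swap2[OF G] by blast
  ultimately show ?thesis by (simp add: qf_alt)
qed

lemma qf_diff_id:
  assumes G: "self_adjoint_op G"
  shows "2 * (G (b - a) \<bullet> (x - b)) = qf G (a - x) - qf G (b - x) - qf G (b - a)"
proof -
  have e: "G (b - a) \<bullet> (x - b) = G b \<bullet> x - qf G b - G a \<bullet> x + G a \<bullet> b"
    by (simp add: qf_alt Gdiff[OF G] inner_diff_left inner_diff_right)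
  have s: "G b \<bullet> a = G a \<bullet> b" using sa_swap2[OF G] by blast
  show ?thesis using e s by (simp add: qf_diff[OF G])
qed



lemma small_t:
  fixes V C :: real
  assumes h: "\<forall>t. 0 < t \<and> t \<le> 1 \<longrightarrow> 0 \<le> t * V + t^2 * C"
  shows "0 \<le> V"
proof (rule ccontr)
  assume "\<not> 0 \<le> V" hence V: "V < 0" by simp
  define t where "t = min 1 (- V / (2 * (\<bar>C\<bar> + 1)))"
  have "0 < - V / (2 * (\<bar>C\<bar> + 1))" using V by (intro divide_pos_pos) auto
  hence tp: "0 < t" by (simp add: t_def)
  have t1: "t \<le> 1" by (simp add: t_def)
  have t2: "t \<le> - V / (2 * (\<bar>C\<bar> + 1))" by (simp add: t_def)
  have "t * (2 * (\<bar>C\<bar> + 1)) \<le> - V"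
  proof -
    have pos: "0 < 2 * (\<bar>C\<bar> + 1)" by simp
    from t2 have "t \<le> (- V) / (2 * (\<bar>C\<bar> + 1))" by simp
    thus ?thesis using pos by (simp only: le_divide_eq)
  qed
  hence a1: "2 * (t * \<bar>C\<bar>) + 2 * t \<le> - V" by (simp add: algebra_simps)
  have a2: "t * C \<le> t * \<bar>C\<bar>" using tp by (intro mult_left_mono) auto
  have "t * C \<le> - V / 2" using a1 a2 tp by linarith
  hence "V + t * C < 0" using V by linarith
  hence "t * (V + t * C) < 0" using tp by (simp add: mult_pos_neg)
  moreover have "0 \<le> t * V + t^2 * C" using h tp t1 by blast
  ultimately show False by (simp add: power2_eq_square algebra_simps)
qed

lemma qf_add_scale:
  assumes G: "self_adjoint_op G"
  shows "qf G (u + t *\<^sub>R d) = qf G u + 2 * t * (G u \<bullet> d) + t^2 * qf G d"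
proof -
  have l: "G (u + t *\<^sub>R d) = G u + t *\<^sub>R G d"
    using sa_lin[OF G] by (simp add: linear_add linear_scale)
  have s: "G d \<bullet> u = G u \<bullet> d" using sa_swap2[OF G] by blast
  show ?thesis using s by (simp add: qf_alt l inner_add_left inner_add_right power2_eq_square algebra_simps)
qed

lemma norm_add_scale:
  fixes a b :: "'a::real_inner"
  shows "(norm (a + t *\<^sub>R b))^2 = (norm a)^2 + 2 * t * (a \<bullet> b) + t^2 * (norm b)^2"
  unfolding power2_norm_eq_inner inner_add_left inner_add_right inner_scaleR_left inner_scaleR_right
  by (simp add: inner_commute power2_eq_square algebra_simps)

lemma opt_vi:
  fixes p :: "'a::euclidean_space \<Rightarrow> ereal" and G :: "'a \<Rightarrow> 'a" and M :: "'a \<Rightarrow> 'b::euclidean_space"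
  assumes cvx: "convex (epi p)" and nm: "\<forall>x. p x \<noteq> -\<infinity>"
    and G: "self_adjoint_op G" and M: "linear M"
    and hh: "\<forall>x. hh x = v \<bullet> x + 1/2 * qf G (x - x0) + z \<bullet> M x + \<sigma>/2 * (norm (M x + w))\<^sup>2"
    and min: "\<forall>x. p xs + ereal (hh xs) \<le> p x + ereal (hh x)"
    and fin: "p x \<noteq> \<infinity>"
  shows "p xs \<noteq> \<infinity> \<and> 0 \<le> real_of_ereal (p x) - real_of_ereal (p xs) + v \<bullet> (x - xs) + z \<bullet> M (x - xs)
          + G (xs - x0) \<bullet> (x - xs) + \<sigma> * ((M xs + w) \<bullet> M (x - xs))"
proof -
  define P1 where "P1 = real_of_ereal (p x)"
  have pxe: "p x = ereal P1" using fin nm unfolding P1_def by (cases "p x") auto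
  have "p xs + ereal (hh xs) \<le> p x + ereal (hh x)" using min by blast
  hence "p xs + ereal (hh xs) \<le> ereal (P1 + hh x)" using pxe by simp
  hence fin0: "p xs \<noteq> \<infinity>" by auto
  define P0 where "P0 = real_of_ereal (p xs)"
  have pxse: "p xs = ereal P0" using fin0 nm unfolding P0_def by (cases "p xs") auto
  define d where "d = x - xs"
  define Lin where "Lin = v \<bullet> d + z \<bullet> M d + G (xs - x0) \<bullet> d + \<sigma> * ((M xs + w) \<bullet> M d)"
  define C where "C = 1/2 * qf G d + \<sigma>/2 * (norm (M d))^2"
  have key: "0 \<le> t * (P1 - P0 + Lin) + t^2 * C" if t: "0 < t" "t \<le> 1" for t
  proof -
    have m0: "(xs, P0) \<in> epi p" using pxse by (simp add: epi_def)
    have m1: "(x, P1) \<in> epi p" using pxe by (simp add: epi_def)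
    have "((1 - t) *\<^sub>R (xs, P0) + t *\<^sub>R (x, P1)) \<in> epi p"
      using convexD_alt[OF cvx m0 m1] t by simp
    moreover have "(1 - t) *\<^sub>R xs + t *\<^sub>R x = xs + t *\<^sub>R d"
      by (simp add: d_def algebra_simps)
    ultimately have ep: "p (xs + t *\<^sub>R d) \<le> ereal ((1-t)*P0 + t*P1)"
      by (simp add: epi_def)
    have Ml: "M (xs + t *\<^sub>R d) = M xs + t *\<^sub>R M d"
      using M by (simp add: linear_add linear_scale)
    have e1: "xs + t *\<^sub>R d - x0 = (xs - x0) + t *\<^sub>R d" by simp
    have e2: "M xs + t *\<^sub>R M d + w = (M xs + w) + t *\<^sub>R M d" by simp
    have hexp: "hh (xs + t *\<^sub>R d) = hh xs + t * Lin + t^2 * C"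
      unfolding hh[rule_format] Ml e1 e2 qf_add_scale[OF G] norm_add_scale
      by (simp add: Lin_def C_def inner_add_right algebra_simps power2_eq_square)
    have "ereal (P0 + hh xs) \<le> p (xs + t *\<^sub>R d) + ereal (hh (xs + t *\<^sub>R d))"
      using min pxse by simp
    also have "\<dots> \<le> ereal ((1-t)*P0 + t*P1) + ereal (hh (xs + t *\<^sub>R d))"
      using ep by (rule add_right_mono)
    finally have "P0 + hh xs \<le> (1-t)*P0 + t*P1 + (hh xs + t * Lin + t^2 * C)"
      by (simp add: hexp)
    thus ?thesis by (simp add: algebra_simps)
  qed
  have "0 \<le> P1 - P0 + Lin" using key small_t by blast
  thus ?thesis using fin0 by (simp add: P1_def P0_def Lin_def d_def)
qed



lemma qf_scaleR: "self_adjoint_op G \<Longrightarrow> qf G (t *\<^sub>R d) = t^2 * qf G d"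
  using sa_lin[of G] by (simp add: qf_def linear_scale power2_eq_square)

lemma qf_neg: "self_adjoint_op G \<Longrightarrow> qf G (- d) = qf G d"
  using qf_scaleR[of G "-1" d] by simp

lemma qf_add:
  assumes G: "self_adjoint_op G"
  shows "qf G (a + b) = qf G a + qf G b + 2 * (G a \<bullet> b)"
  using qf_add_scale[OF G, of a 1 b] by simp

lemma qf_par:
  assumes G: "self_adjoint_op G"
  shows "qf G (a + b) + qf G (a - b) = 2 * qf G a + 2 * qf G b"
  using qf_add[OF G, of a b] qf_diff[OF G, of a b] by simp

lemma grad3:
  fixes f :: "'a::real_inner \<Rightarrow> real"
  assumes bd: "\<And>x x'. f x' + (x - x') \<bullet> gf x' + 1/2 * qf Sf (x - x') \<le> f x
                         \<and> f x \<le> f x' + (x - x') \<bullet> gf x' + 1/2 * qf Shf (x - x')"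
    and sa: "self_adjoint_op Sf" and ps: "psd_op Sf"
  shows "gf x \<bullet> (x1 - x) \<le> gf x0 \<bullet> (x1 - x) + 1/2 * qf Shf (x1 - x0) - 1/4 * qf Sf (x1 - x0)"
proof -
  have b1: "f x0 + (x - x0) \<bullet> gf x0 + 1/2 * qf Sf (x - x0) \<le> f x" using bd by blast
  have b2: "f x1 \<le> f x0 + (x1 - x0) \<bullet> gf x0 + 1/2 * qf Shf (x1 - x0)" using bd by blast
  have b3: "f x + (x1 - x) \<bullet> gf x + 1/2 * qf Sf (x1 - x) \<le> f x1" using bd by blast
  have p0: "0 \<le> qf Sf ((x - x0) - (x1 - x))" using ps by (simp add: psd_op_def qf_def)
  have pp: "qf Sf ((x - x0) + (x1 - x)) + qf Sf ((x - x0) - (x1 - x)) = 2 * qf Sf (x - x0) + 2 * qf Sf (x1 - x)"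
    by (rule qf_par[OF sa])
  have e: "(x - x0) + (x1 - x) = x1 - x0" by simp
  have i1: "(x1 - x0) \<bullet> gf x0 = (x - x0) \<bullet> gf x0 + (x1 - x) \<bullet> gf x0"
    by (simp add: inner_diff_left)
  show ?thesis using b1 b2 b3 p0 pp i1 unfolding e by (simp add: inner_commute)
qed

lemma grad4u:
  fixes f :: "'a::real_inner \<Rightarrow> real"
  assumes bd: "\<And>x x'. f x' + (x - x') \<bullet> gf x' + 1/2 * qf Sf (x - x') \<le> f x
                         \<and> f x \<le> f x' + (x - x') \<bullet> gf x' + 1/2 * qf Shf (x - x')"
    and sa: "self_adjoint_op Sf" and ps: "psd_op Sf" and sh: "self_adjoint_op Shf"
  shows "2 * ((gf b - gf a) \<bullet> u) - qf Shf u \<le> (gf b - gf a) \<bullet> (b - a)"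
proof -
  have l1: "f a + (b - u - a) \<bullet> gf a + 1/2 * qf Sf (b - u - a) \<le> f (b - u)" using bd by blast
  have u1: "f (b - u) \<le> f b + (b - u - b) \<bullet> gf b + 1/2 * qf Shf (b - u - b)" using bd by blast
  have l2: "f b + (a + u - b) \<bullet> gf b + 1/2 * qf Sf (a + u - b) \<le> f (a + u)" using bd by blast
  have u2: "f (a + u) \<le> f a + (a + u - a) \<bullet> gf a + 1/2 * qf Shf (a + u - a)" using bd by blast
  have p1: "0 \<le> qf Sf (b - u - a)" "0 \<le> qf Sf (a + u - b)" using ps by (simp_all add: psd_op_def qf_def)
  have q: "qf Shf (b - u - b) = qf Shf u" using qf_neg[OF sh, of u] by simp
  have q2: "a + u - a = u" by simp
  have r: "(b - u - a) \<bullet> gf a = (b - a) \<bullet> gf a - u \<bullet> gf a"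
          "(b - u - b) \<bullet> gf b = - (u \<bullet> gf b)"
          "(a + u - b) \<bullet> gf b = - ((b - a) \<bullet> gf b) + u \<bullet> gf b"
    by (simp_all add: inner_diff_left inner_add_left)
  have s: "(gf b - gf a) \<bullet> u = u \<bullet> gf b - u \<bullet> gf a"
          "(gf b - gf a) \<bullet> (b - a) = (b - a) \<bullet> gf b - (b - a) \<bullet> gf a"
    by (simp_all add: inner_diff_left inner_diff_right inner_commute)
  show ?thesis using l1 u1 l2 u2 p1 q r s unfolding q2 by linarith
qed

lemma grad4:
  fixes f :: "'a::real_inner \<Rightarrow> real"
  assumes bd: "\<And>x x'. f x' + (x - x') \<bullet> gf x' + 1/2 * qf Sf (x - x') \<le> f x
                         \<and> f x \<le> f x' + (x - x') \<bullet> gf x' + 1/2 * qf Shf (x - x')"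
    and sa: "self_adjoint_op Sf" and ps: "psd_op Sf" and sh: "self_adjoint_op Shf"
  shows "- 1/4 * qf Shf ((c - b) - (b - a)) \<le> (gf b - gf a) \<bullet> (c - b)"
proof -
  define e where "e = (c - b) - (b - a)"
  have h: "2 * ((gf b - gf a) \<bullet> ((-(1/2)) *\<^sub>R e)) - qf Shf ((-(1/2)) *\<^sub>R e) \<le> (gf b - gf a) \<bullet> (b - a)"
    by (rule grad4u[OF bd sa ps sh])
  have q: "qf Shf ((-(1/2)) *\<^sub>R e) = 1/4 * qf Shf e" using qf_scaleR[OF sh, of "-(1/2)" e] by (simp add: power2_eq_square)
  have i: "(gf b - gf a) \<bullet> (c - b) = (gf b - gf a) \<bullet> (b - a) + (gf b - gf a) \<bullet> e"
    by (simp add: e_def inner_diff_right)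
  show ?thesis using h q i unfolding e_def[symmetric] by simp
qed



lemma zA:
  fixes ax by' aXn bYo bYn c Zo z :: "'z::real_inner"
  assumes tp: "\<tau> > 0" and sp: "\<sigma> > 0"
  shows "z \<bullet> (aXn - ax) + z \<bullet> (bYn - by') + (Zo + \<sigma> *\<^sub>R (aXn + bYn - c) - z) \<bullet> (-(ax + by' - c))
   + Zo \<bullet> (ax - aXn) + \<sigma>*((aXn + (bYo - c)) \<bullet> (ax - aXn))
   + Zo \<bullet> (by' - bYn) + \<sigma>*((bYn + (aXn - c)) \<bullet> (by' - bYn))
   + 1/2*((1/(\<tau>*\<sigma>)*(norm (Zo + (\<tau>*\<sigma>) *\<^sub>R (aXn + bYn - c) - z))\<^sup>2 + \<sigma>*(norm(ax + bYn - c))\<^sup>2)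
          - (1/(\<tau>*\<sigma>)*(norm(Zo - z))\<^sup>2 + \<sigma>*(norm(ax+bYo-c))\<^sup>2))
   + 1/2*((1-\<tau>)*\<sigma>*(norm (aXn + bYn - c))\<^sup>2 + \<sigma>*(norm (aXn + bYo - c))\<^sup>2) = 0"
proof -
  define R where "R = aXn + bYn - c"
  have e: "Zo + (\<tau>*\<sigma>) *\<^sub>R R - z = (Zo - z) + (\<tau>*\<sigma>) *\<^sub>R R" by simp
  have n: "1/(\<tau>*\<sigma>)*(norm (Zo + (\<tau>*\<sigma>) *\<^sub>R R - z))\<^sup>2 - 1/(\<tau>*\<sigma>)*(norm(Zo - z))\<^sup>2
      = 2 * ((Zo - z) \<bullet> R) + \<tau>*\<sigma>*(norm R)\<^sup>2"
    unfolding e norm_add_scale using tp sp by (simp add: field_simps power2_eq_square)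
  have "z \<bullet> (aXn - ax) + z \<bullet> (bYn - by') + (Zo + \<sigma> *\<^sub>R R - z) \<bullet> (-(ax + by' - c))
   + Zo \<bullet> (ax - aXn) + \<sigma>*((aXn + (bYo - c)) \<bullet> (ax - aXn))
   + Zo \<bullet> (by' - bYn) + \<sigma>*((bYn + (aXn - c)) \<bullet> (by' - bYn))
   + 1/2*((2 * ((Zo - z) \<bullet> R) + \<tau>*\<sigma>*(norm R)\<^sup>2 + \<sigma>*(norm(ax + bYn - c))\<^sup>2)
          - (\<sigma>*(norm(ax+bYo-c))\<^sup>2))
   + 1/2*((1-\<tau>)*\<sigma>*(norm R)\<^sup>2 + \<sigma>*(norm (aXn + bYo - c))\<^sup>2) = 0"
    unfolding R_def power2_norm_eq_inner
    by (simp add: inner_add_left inner_add_right inner_diff_left inner_diff_right inner_commute algebra_simps)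
  thus ?thesis using n unfolding R_def by (simp add: algebra_simps)
qed



lemma zq:
  fixes aXo aXn bYo bYn c Zm :: "'z::real_inner"
  shows "(Zm + (\<tau>*\<sigma>) *\<^sub>R (aXo + bYo - c)) \<bullet> (bYo - bYn) + Zm \<bullet> (bYn - bYo)
     + \<sigma>*((bYn + (aXn - c)) \<bullet> (bYo - bYn)) + \<sigma>*((bYo + (aXo - c)) \<bullet> (bYn - bYo))
   = (1-\<tau>)*\<sigma>*((aXo + bYo - c) \<bullet> (bYn - bYo)) - \<sigma>*((aXn + bYn - c) \<bullet> (bYn - bYo))"
  by (simp add: inner_add_left inner_add_right inner_diff_left inner_diff_right inner_commute algebra_simps)

lemma nn:
  fixes aXn bYo bYn c :: "'z::real_inner"
  shows "\<sigma>*(norm (aXn + bYn - c))\<^sup>2 - \<sigma>*(norm (aXn + bYo - c))\<^sup>2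
     = 2*\<sigma>*((aXn + bYn - c) \<bullet> (bYn - bYo)) - \<sigma>*(norm (bYn - bYo))\<^sup>2"
  unfolding power2_norm_eq_inner
  by (simp add: inner_add_left inner_add_right inner_diff_left inner_diff_right inner_commute algebra_simps)

lemma norm_diff_sq_le:
  fixes a b :: "'z::real_inner"
  shows "(norm (a - b))\<^sup>2 \<le> 2*(norm a)\<^sup>2 + 2*(norm b)\<^sup>2"
proof -
  have "0 \<le> (norm (a + b))\<^sup>2" by simp
  moreover have "(norm (a - b))\<^sup>2 + (norm (a + b))\<^sup>2 = 2*(norm a)\<^sup>2 + 2*(norm b)\<^sup>2"
    unfolding power2_norm_eq_inner
    by (simp add: inner_add_left inner_add_right inner_diff_left inner_diff_right inner_commute algebra_simps)
  ultimately show ?thesis by linarith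
qed

lemma bracket:
  fixes R D :: "'z::real_inner"
  assumes tp: "\<tau> > 0" and sp: "\<sigma> > 0"
  shows "2*(1-\<tau>)*\<sigma>*(R \<bullet> D) \<le> (1 - min \<tau> (1/\<tau>))*\<sigma>*(norm R)\<^sup>2 + (1 - min \<tau> (1 + \<tau> - \<tau>\<^sup>2))*\<sigma>*(norm D)\<^sup>2"
proof -
  define a where "a = (norm R)\<^sup>2"
  define b where "b = (norm D)\<^sup>2"
  define i where "i = R \<bullet> D"
  have h1: "0 \<le> a + b - 2*i"
  proof -
    have "(norm (R - D))\<^sup>2 = a + b - 2*i" unfolding a_def b_def i_def power2_norm_eq_inner
      by (simp add: inner_diff_left inner_diff_right inner_commute)
    thus ?thesis by (metis zero_le_power2)
  qed
  have h2: "0 \<le> a + 2*\<tau>*i + \<tau>^2*b"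
  proof -
    have "(norm (R + \<tau> *\<^sub>R D))\<^sup>2 = a + 2*\<tau>*i + \<tau>^2*b"
      unfolding a_def b_def i_def norm_add_scale by simp
    thus ?thesis by (metis zero_le_power2)
  qed
  show ?thesis
  proof (cases "\<tau> \<le> 1")
    case True
    have "\<tau> * \<tau> \<le> 1" using True tp by (simp add: mult_le_one)
    hence "\<tau> \<le> 1/\<tau>" using tp by (simp add: le_divide_eq)
    hence m0: "min \<tau> (1/\<tau>) = \<tau>" by (simp add: min_def)
    have "\<tau>^2 \<le> 1" using True tp by (simp add: power_le_one)
    hence m1: "min \<tau> (1 + \<tau> - \<tau>\<^sup>2) = \<tau>" by (simp add: min_def)
    have "0 \<le> ((1-\<tau>)*\<sigma>) * (a + b - 2*i)" using True sp h1 by simp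
    thus ?thesis unfolding m0 m1 a_def[symmetric] b_def[symmetric] i_def[symmetric]
      by (simp add: algebra_simps)
  next
    case False
    have "1/\<tau> < 1" using False by simp
    hence "1/\<tau> \<le> \<tau>" using False by linarith
    hence m0: "min \<tau> (1/\<tau>) = 1/\<tau>" by (simp add: min_def)
    have "1 < \<tau> * \<tau>" using False by (intro less_1_mult) auto
    hence "1 + \<tau> - \<tau>\<^sup>2 \<le> \<tau>" by (simp add: power2_eq_square)
    hence m1: "min \<tau> (1 + \<tau> - \<tau>\<^sup>2) = 1 + \<tau> - \<tau>\<^sup>2" by (simp add: min_def)
    have "0 \<le> ((\<tau>-1)/\<tau>*\<sigma>) * (a + 2*\<tau>*i + \<tau>^2*b)" using False sp tp h2 by simp
    moreover have "((\<tau>-1)/\<tau>*\<sigma>) * (a + 2*\<tau>*i + \<tau>^2*b)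
        = (1 - 1/\<tau>)*\<sigma>*a + (1 - (1 + \<tau> - \<tau>\<^sup>2))*\<sigma>*b - 2*(1-\<tau>)*\<sigma>*i"
      using tp by (simp add: field_simps power2_eq_square)
    ultimately show ?thesis unfolding m0 m1 a_def[symmetric] b_def[symmetric] i_def[symmetric]
      by linarith
  qed
qed

lemma final_b:
  fixes G P1 P0 s n1 nU nA n0 x1 x0 m0 m1 nD \<tau> \<sigma> \<alpha> :: real
  assumes A: "G + 1/2*(P1 - P0) \<le> -1/2*(s + (1-\<tau>)*\<sigma>*n1 + \<sigma>*nU)"
    and Q1: "nA \<le> 2*nU + 2*n0"
    and Q2: "x1 - x0 - \<sigma>*nU - (1-m0)*\<sigma>*n0 + m1*\<sigma>*nD + \<sigma>*n1 \<le> 0"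
    and a0: "0 < \<alpha>" and a1: "\<alpha> \<le> 1" and sp: "0 < \<sigma>"
  shows "G + 1/2*((P1 + (1 - \<alpha>*m0)*\<sigma>*n1 + \<alpha>*x1) - (P0 + (1-\<alpha>*m0)*\<sigma>*n0 + \<alpha>*x0))
     \<le> -1/2*((s + (1-\<alpha>)*\<sigma>/2*nA + m1*\<alpha>*\<sigma>*nD) + (-\<tau> + \<alpha>*(1+m0))*\<sigma>*n1)"
proof -
  have h1: "\<alpha> * (x1 - x0 - \<sigma>*nU - (1-m0)*\<sigma>*n0 + m1*\<sigma>*nD + \<sigma>*n1) \<le> 0"
    using a0 Q2 by (simp add: mult_nonneg_nonpos)
  have h2: "((1-\<alpha>)*\<sigma>) * (nA - 2*nU - 2*n0) \<le> 0"
    using a1 sp Q1 by (intro mult_nonneg_nonpos) auto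
  have eq: "(G + 1/2*((P1 + (1 - \<alpha>*m0)*\<sigma>*n1 + \<alpha>*x1) - (P0 + (1-\<alpha>*m0)*\<sigma>*n0 + \<alpha>*x0)))
     - (-1/2*((s + (1-\<alpha>)*\<sigma>/2*nA + m1*\<alpha>*\<sigma>*nD) + (-\<tau> + \<alpha>*(1+m0))*\<sigma>*n1))
     = (G + 1/2*(P1 - P0) - (-1/2*(s + (1-\<tau>)*\<sigma>*n1 + \<sigma>*nU)))
       + 1/2 * (\<alpha> * (x1 - x0 - \<sigma>*nU - (1-m0)*\<sigma>*n0 + m1*\<sigma>*nD + \<sigma>*n1))
       + 1/4 * (((1-\<alpha>)*\<sigma>) * (nA - 2*nU - 2*n0))"
    by (simp add: field_simps)
  show ?thesis using eq A h1 h2 by linarith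
qed



lemma sa_add: "self_adjoint_op F \<Longrightarrow> self_adjoint_op G \<Longrightarrow> self_adjoint_op (\<lambda>u. F u + G u)"
  unfolding self_adjoint_op_def by (auto simp: linear_add inner_add_left inner_add_right intro: linear_compose_add)

lemma qf_sum: "qf (\<lambda>u. F u + G u) w = qf F w + qf G w"
  by (simp add: qf_def inner_add_right)

lemma qf_hsum: "qf (\<lambda>u. a *\<^sub>R F u + G u) w = a * qf F w + qf G w"
  by (simp add: qf_def inner_add_right)

lemma qf_hsum3:
  fixes A :: "'z::euclidean_space \<Rightarrow> 'x::euclidean_space"
  assumes "linear A"
  shows "qf (\<lambda>u. a *\<^sub>R F u + G u + b *\<^sub>R A (adjoint A u)) w = a * qf F w + qf G w + b * (norm (adjoint A w))\<^sup>2"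
  by (simp add: qf_def inner_add_right adjoint_clauses[OF assms] power2_norm_eq_inner inner_commute)

lemma cpc_facts: "closed_proper_convex p \<Longrightarrow> convex (epi p) \<and> (\<forall>x. p x \<noteq> -\<infinity>) \<and> (\<exists>x. p x \<noteq> \<infinity>)"
  by (simp add: closed_proper_convex_def)

theorem proposition3p4:
  fixes p :: "'x::euclidean_space \<Rightarrow> ereal" and q :: "'y::euclidean_space \<Rightarrow> ereal"
    and f :: "'x \<Rightarrow> real" and g :: "'y \<Rightarrow> real"
    and gf :: "'x \<Rightarrow> 'x" and gg :: "'y \<Rightarrow> 'y"
    and A :: "'z::euclidean_space \<Rightarrow> 'x" and B :: "'z \<Rightarrow> 'y" and c :: 'z
    and Sf Shf S :: "'x \<Rightarrow> 'x" and Sg Shg T :: "'y \<Rightarrow> 'y"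
    and \<sigma> \<tau> :: real
    and xs :: "nat \<Rightarrow> 'x" and ys :: "nat \<Rightarrow> 'y" and zs :: "nat \<Rightarrow> 'z"
  defines "Lx \<equiv> \<lambda>k x. p x + ereal (gf (xs k) \<bullet> x + 1/2 * qf (\<lambda>u. Shf u + S u) (x - xs k)
              + zs k \<bullet> adjoint A x + \<sigma>/2 * (norm (adjoint A x + adjoint B (ys k) - c))\<^sup>2)"
  defines "Ly \<equiv> \<lambda>k y. q y + ereal (gg (ys k) \<bullet> y + 1/2 * qf (\<lambda>u. Shg u + T u) (y - ys k)
              + zs k \<bullet> adjoint B y + \<sigma>/2 * (norm (adjoint A (xs (Suc k)) + adjoint B y - c))\<^sup>2)"
  defines "r \<equiv> \<lambda>k. adjoint A (xs k) + adjoint B (ys k) - c"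
  defines "\<Gamma> \<equiv> \<lambda>k x y z. (p (xs (Suc k)) + q (ys (Suc k))) - (p x + q y)
              + ereal ((xs (Suc k) - x) \<bullet> (gf x + A z) + (ys (Suc k) - y) \<bullet> (gg y + B z)
                       + (zs k + \<sigma> *\<^sub>R r (Suc k) - z) \<bullet> (- (adjoint A x + adjoint B y - c)))"
  defines "\<phi> \<equiv> \<lambda>k x y z. 1 / (\<tau> * \<sigma>) * (norm (zs k - z))\<^sup>2 + qf (\<lambda>u. Shf u + S u) (xs k - x)
              + qf (\<lambda>u. Shg u + T u) (ys k - y) + \<sigma> * (norm (adjoint A x + adjoint B (ys k) - c))\<^sup>2"
  defines "\<xi> \<equiv> \<lambda>k. qf (\<lambda>u. Shg u + T u) (ys k - ys (k - 1))"
  defines "s \<equiv> \<lambda>k. qf (\<lambda>u. (1/2) *\<^sub>R Sf u + S u) (xs k - xs (k - 1))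
              + qf (\<lambda>u. (1/2) *\<^sub>R Sg u + T u) (ys k - ys (k - 1))"
  defines "Hf \<equiv> \<lambda>\<alpha> u. (1/2) *\<^sub>R Sf u + S u + ((1 - \<alpha>) * \<sigma> / 2) *\<^sub>R A (adjoint A u)"
  defines "Mg \<equiv> \<lambda>\<alpha> u. (1/2) *\<^sub>R Sg u + T u + (min \<tau> (1 + \<tau> - \<tau>\<^sup>2) * \<alpha> * \<sigma>) *\<^sub>R B (adjoint B u)"
  defines "t \<equiv> \<lambda>\<alpha> k. qf (Hf \<alpha>) (xs k - xs (k - 1)) + qf (Mg \<alpha>) (ys k - ys (k - 1))"
  assumes p_cpc: "closed_proper_convex p" and q_cpc: "closed_proper_convex q"
    and f_convex: "convex_on UNIV f" and g_convex: "convex_on UNIV g"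
    and f_grad: "\<And>x. (f has_derivative (\<lambda>h. gf x \<bullet> h)) (at x)"
    and g_grad: "\<And>y. (g has_derivative (\<lambda>h. gg y \<bullet> h)) (at y)"
    and gf_lip: "\<exists>L. L-lipschitz_on UNIV gf" and gg_lip: "\<exists>L. L-lipschitz_on UNIV gg"
    and A_lin: "linear A" and B_lin: "linear B"
    and Sf_sa: "self_adjoint_op Sf" and Sf_psd: "psd_op Sf"
    and Shf_sa: "self_adjoint_op Shf" and Shf_psd: "psd_op Shf"
    and Shf_ge: "psd_op (\<lambda>u. Shf u - Sf u)"
    and Sg_sa: "self_adjoint_op Sg" and Sg_psd: "psd_op Sg"
    and Shg_sa: "self_adjoint_op Shg" and Shg_psd: "psd_op Shg"
    and Shg_ge: "psd_op (\<lambda>u. Shg u - Sg u)"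
    and f_bounds: "\<And>x x'. f x' + (x - x') \<bullet> gf x' + 1/2 * qf Sf (x - x') \<le> f x
                         \<and> f x \<le> f x' + (x - x') \<bullet> gf x' + 1/2 * qf Shf (x - x')"
    and g_bounds: "\<And>y y'. g y' + (y - y') \<bullet> gg y' + 1/2 * qf Sg (y - y') \<le> g y
                         \<and> g y \<le> g y' + (y - y') \<bullet> gg y' + 1/2 * qf Shg (y - y')"
    and sigma_pos: "\<sigma> > 0" and tau_pos: "\<tau> > 0"
    and S_sa: "self_adjoint_op S" and T_sa: "self_adjoint_op T"
    and S_cond: "psd_op (\<lambda>u. Shf u + S u + \<sigma> *\<^sub>R A (adjoint A u))"
    and T_cond: "psd_op (\<lambda>u. Shg u + T u + \<sigma> *\<^sub>R B (adjoint B u))"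
    and x0_dom: "p (xs 0) \<noteq> \<infinity>" and y0_dom: "q (ys 0) \<noteq> \<infinity>"
    and x_step: "\<And>k x. Lx k (xs (Suc k)) \<le> Lx k x"
    and y_step: "\<And>k y. Ly k (ys (Suc k)) \<le> Ly k y"
    and z_step: "\<And>k. zs (Suc k) = zs k + (\<tau> * \<sigma>) *\<^sub>R (adjoint A (xs (Suc k)) + adjoint B (ys (Suc k)) - c)"
  shows "(\<forall>k x y z. \<Gamma> k x y z + ereal (1/2 * (\<phi> (Suc k) x y z - \<phi> k x y z))
            \<le> ereal (- 1/2 * (s (Suc k) + (1 - \<tau>) * \<sigma> * (norm (r (Suc k)))\<^sup>2
                 + \<sigma> * (norm (adjoint A (xs (Suc k)) + adjoint B (ys k) - c))\<^sup>2)))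
       \<and> (psd_op (\<lambda>u. (1/2) *\<^sub>R Shg u + T u) \<longrightarrow>
          (\<forall>\<alpha> k x y z. 0 < \<alpha> \<and> \<alpha> \<le> 1 \<and> 1 \<le> k \<longrightarrow>
            (let \<kappa> = 1 - \<alpha> * min \<tau> (1 / \<tau>) in
             \<Gamma> k x y z + ereal (1/2 * ((\<phi> (Suc k) x y z + \<kappa> * \<sigma> * (norm (r (Suc k)))\<^sup>2 + \<alpha> * \<xi> (Suc k))
                                    - (\<phi> k x y z + \<kappa> * \<sigma> * (norm (r k))\<^sup>2 + \<alpha> * \<xi> k)))
             \<le> ereal (- 1/2 * (t \<alpha> (Suc k)
                   + (- \<tau> + \<alpha> * min (1 + \<tau>) (1 + 1 / \<tau>)) * \<sigma> * (norm (r (Suc k)))\<^sup>2)))))"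
proof -
  have Gx_sa: "self_adjoint_op (\<lambda>u. Shf u + S u)" by (rule sa_add[OF Shf_sa S_sa])
  have Gy_sa: "self_adjoint_op (\<lambda>u. Shg u + T u)" by (rule sa_add[OF Shg_sa T_sa])
  have AL: "linear (adjoint A)" by (rule adjoint_linear[OF A_lin])
  have BL: "linear (adjoint B)" by (rule adjoint_linear[OF B_lin])
  have cvxp: "convex (epi p)" and nmp: "\<forall>x. p x \<noteq> -\<infinity>" and exp: "\<exists>x. p x \<noteq> \<infinity>"
    using cpc_facts[OF p_cpc] by auto
  have cvxq: "convex (epi q)" and nmq: "\<forall>x. q x \<noteq> -\<infinity>" and exq: "\<exists>x. q x \<noteq> \<infinity>"
    using cpc_facts[OF q_cpc] by auto
  have xvi: "p (xs (Suc k)) \<noteq> \<infinity> \<and> 0 \<le> real_of_ereal (p x) - real_of_ereal (p (xs (Suc k)))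
      + gf (xs k) \<bullet> (x - xs (Suc k)) + zs k \<bullet> adjoint A (x - xs (Suc k))
      + (Shf (xs (Suc k) - xs k) + S (xs (Suc k) - xs k)) \<bullet> (x - xs (Suc k))
      + \<sigma> * ((adjoint A (xs (Suc k)) + (adjoint B (ys k) - c)) \<bullet> adjoint A (x - xs (Suc k)))"
    if fin: "p x \<noteq> \<infinity>" for k x
  proof -
    define hh where "hh = (\<lambda>x. gf (xs k) \<bullet> x + 1/2 * qf (\<lambda>u. Shf u + S u) (x - xs k)
              + zs k \<bullet> adjoint A x + \<sigma>/2 * (norm (adjoint A x + adjoint B (ys k) - c))\<^sup>2)"
    have hh: "\<forall>x. hh x = gf (xs k) \<bullet> x + 1/2 * qf (\<lambda>u. Shf u + S u) (x - xs k)
              + zs k \<bullet> adjoint A x + \<sigma>/2 * (norm (adjoint A x + (adjoint B (ys k) - c)))\<^sup>2"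
      by (simp add: hh_def add_diff_eq)
    have mn: "\<forall>x. p (xs (Suc k)) + ereal (hh (xs (Suc k))) \<le> p x + ereal (hh x)"
      using x_step unfolding Lx_def hh_def by blast
    show ?thesis using opt_vi[OF cvxp nmp Gx_sa AL hh mn fin] by simp
  qed
  have yvi: "q (ys (Suc k)) \<noteq> \<infinity> \<and> 0 \<le> real_of_ereal (q y) - real_of_ereal (q (ys (Suc k)))
      + gg (ys k) \<bullet> (y - ys (Suc k)) + zs k \<bullet> adjoint B (y - ys (Suc k))
      + (Shg (ys (Suc k) - ys k) + T (ys (Suc k) - ys k)) \<bullet> (y - ys (Suc k))
      + \<sigma> * ((adjoint B (ys (Suc k)) + (adjoint A (xs (Suc k)) - c)) \<bullet> adjoint B (y - ys (Suc k)))"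
    if fin: "q y \<noteq> \<infinity>" for k y
  proof -
    define hh where "hh = (\<lambda>y. gg (ys k) \<bullet> y + 1/2 * qf (\<lambda>u. Shg u + T u) (y - ys k)
              + zs k \<bullet> adjoint B y + \<sigma>/2 * (norm (adjoint A (xs (Suc k)) + adjoint B y - c))\<^sup>2)"
    have e: "\<And>y. adjoint A (xs (Suc k)) + adjoint B y - c = adjoint B y + (adjoint A (xs (Suc k)) - c)"
      by (simp add: algebra_simps)
    have hh: "\<forall>y. hh y = gg (ys k) \<bullet> y + 1/2 * qf (\<lambda>u. Shg u + T u) (y - ys k)
              + zs k \<bullet> adjoint B y + \<sigma>/2 * (norm (adjoint B y + (adjoint A (xs (Suc k)) - c)))\<^sup>2"
      by (simp add: hh_def e)
    have mn: "\<forall>y. q (ys (Suc k)) + ereal (hh (ys (Suc k))) \<le> q y + ereal (hh y)"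
      using y_step unfolding Ly_def hh_def by blast
    show ?thesis using opt_vi[OF cvxq nmq Gy_sa BL hh mn fin] by simp
  qed
  have finp: "p (xs (Suc k)) \<noteq> \<infinity>" for k using xvi exp by blast
  have finq: "q (ys (Suc k)) \<noteq> \<infinity>" for k using yvi exq by blast
  define \<Gamma>r where "\<Gamma>r = (\<lambda>k x y z. real_of_ereal (p (xs (Suc k))) + real_of_ereal (q (ys (Suc k)))
     - (real_of_ereal (p x) + real_of_ereal (q y))
     + ((xs (Suc k) - x) \<bullet> (gf x + A z) + (ys (Suc k) - y) \<bullet> (gg y + B z)
        + (zs k + \<sigma> *\<^sub>R r (Suc k) - z) \<bullet> (- (adjoint A x + adjoint B y - c))))"
  have Gfin: "\<Gamma> k x y z = ereal (\<Gamma>r k x y z)" if fx: "p x \<noteq> \<infinity>" and fy: "q y \<noteq> \<infinity>" for k x y z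
  proof -
    obtain P1 where P1: "p (xs (Suc k)) = ereal P1" using finp nmp by (cases "p (xs (Suc k))") auto
    obtain Q1 where Q1: "q (ys (Suc k)) = ereal Q1" using finq nmq by (cases "q (ys (Suc k))") auto
    obtain P where P: "p x = ereal P" using fx nmp by (cases "p x") auto
    obtain Q where Q: "q y = ereal Q" using fy nmq by (cases "q y") auto
    show ?thesis unfolding \<Gamma>_def \<Gamma>r_def P1 Q1 P Q by simp
  qed
  have Ginf: "\<Gamma> k x y z = -\<infinity>" if inf: "p x = \<infinity> \<or> q y = \<infinity>" for k x y z
  proof -
    obtain P1 where P1: "p (xs (Suc k)) = ereal P1" using finp nmp by (cases "p (xs (Suc k))") auto
    obtain Q1 where Q1: "q (ys (Suc k)) = ereal Q1" using finq nmq by (cases "q (ys (Suc k))") auto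
    have pq: "p x + q y = \<infinity>" using inf nmp nmq by (metis ereal_plus_eq_PInfty)
    have "ereal P1 + ereal Q1 - (p x + q y) = -\<infinity>" unfolding pq by simp
    thus ?thesis unfolding \<Gamma>_def P1 Q1 by simp
  qed
  have Areal: "\<Gamma>r k x y z + 1/2 * (\<phi> (Suc k) x y z - \<phi> k x y z)
      \<le> - 1/2 * (s (Suc k) + (1 - \<tau>) * \<sigma> * (norm (r (Suc k)))\<^sup>2
                 + \<sigma> * (norm (adjoint A (xs (Suc k)) + adjoint B (ys k) - c))\<^sup>2)"
    if px: "p x \<noteq> \<infinity>" and qy: "q y \<noteq> \<infinity>" for k x y z
  proof -
    note F1 = conjunct2[OF xvi[OF px, of k]]
    note F2 = conjunct2[OF yvi[OF qy, of k]]
    note E3 = grad3[OF f_bounds Sf_sa Sf_psd, of x "xs (Suc k)" "xs k"]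
    note E4 = grad3[OF g_bounds Sg_sa Sg_psd, of y "ys (Suc k)" "ys k"]
    note I1 = qf_diff_id[OF Gx_sa, of "xs (Suc k)" "xs k" x]
    note I2 = qf_diff_id[OF Gy_sa, of "ys (Suc k)" "ys k" y]
    note ZA = zA[OF tau_pos sigma_pos, where ax = "adjoint A x" and by' = "adjoint B y"
      and aXn = "adjoint A (xs (Suc k))" and bYo = "adjoint B (ys k)" and bYn = "adjoint B (ys (Suc k))"
      and c = c and Zo = "zs k" and z = z]
    let ?X1 = "xs (Suc k)" and ?X0 = "xs k" and ?Y1 = "ys (Suc k)" and ?Y0 = "ys k"
    let ?ax = "adjoint A x" and ?by = "adjoint B y" and ?aX1 = "adjoint A (xs (Suc k))"
      and ?bY0 = "adjoint B (ys k)" and ?bY1 = "adjoint B (ys (Suc k))"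
    have c1: "gf ?X0 \<bullet> (x - ?X1) = - (gf ?X0 \<bullet> (?X1 - x))" by (simp add: inner_diff_right)
    have c2: "gg ?Y0 \<bullet> (y - ?Y1) = - (gg ?Y0 \<bullet> (?Y1 - y))" by (simp add: inner_diff_right)
    have c3: "adjoint A (x - ?X1) = ?ax - ?aX1" by (rule linear_diff[OF AL])
    have c4: "adjoint B (y - ?Y1) = ?by - ?bY1" by (rule linear_diff[OF BL])
    have c5: "(?X1 - x) \<bullet> (gf x + A z) = gf x \<bullet> (?X1 - x) + z \<bullet> (?aX1 - ?ax)"
      using adjoint_clauses(1)[OF A_lin, of z "?X1 - x"] linear_diff[OF AL, of ?X1 x]
      by (simp add: inner_add_right inner_commute)
    have c6: "(?Y1 - y) \<bullet> (gg y + B z) = gg y \<bullet> (?Y1 - y) + z \<bullet> (?bY1 - ?by)"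
      using adjoint_clauses(1)[OF B_lin, of z "?Y1 - y"] linear_diff[OF BL, of ?Y1 y]
      by (simp add: inner_add_right inner_commute)
    have q1: "qf (\<lambda>u. Shf u + S u) (?X1 - ?X0) = qf Shf (?X1 - ?X0) + qf S (?X1 - ?X0)" by (rule qf_sum)
    have q2: "qf (\<lambda>u. Shg u + T u) (?Y1 - ?Y0) = qf Shg (?Y1 - ?Y0) + qf T (?Y1 - ?Y0)" by (rule qf_sum)
    have rr: "r (Suc k) = ?aX1 + ?bY1 - c" by (simp add: r_def)
    have phi1: "\<phi> (Suc k) x y z = 1/(\<tau>*\<sigma>)*(norm (zs k + (\<tau>*\<sigma>) *\<^sub>R (?aX1 + ?bY1 - c) - z))\<^sup>2
       + qf (\<lambda>u. Shf u + S u) (?X1 - x) + qf (\<lambda>u. Shg u + T u) (?Y1 - y) + \<sigma>*(norm (?ax + ?bY1 - c))\<^sup>2"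
      by (simp add: \<phi>_def z_step)
    have phi0: "\<phi> k x y z = 1/(\<tau>*\<sigma>)*(norm (zs k - z))\<^sup>2
       + qf (\<lambda>u. Shf u + S u) (?X0 - x) + qf (\<lambda>u. Shg u + T u) (?Y0 - y) + \<sigma>*(norm (?ax + ?bY0 - c))\<^sup>2"
      by (simp add: \<phi>_def)
    have sk: "s (Suc k) = 1/2 * qf Sf (?X1 - ?X0) + qf S (?X1 - ?X0) + (1/2 * qf Sg (?Y1 - ?Y0) + qf T (?Y1 - ?Y0))"
      by (simp add: s_def qf_hsum)
    have gr: "\<Gamma>r k x y z = real_of_ereal (p ?X1) + real_of_ereal (q ?Y1) - (real_of_ereal (p x) + real_of_ereal (q y))
      + (gf x \<bullet> (?X1 - x) + z \<bullet> (?aX1 - ?ax) + (gg y \<bullet> (?Y1 - y) + z \<bullet> (?bY1 - ?by))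
        + (zs k + \<sigma> *\<^sub>R (?aX1 + ?bY1 - c) - z) \<bullet> (- (?ax + ?by - c)))"
      unfolding \<Gamma>r_def c5 c6 rr by simp
    have I1': "2 * ((Shf (?X1 - ?X0) + S (?X1 - ?X0)) \<bullet> (x - ?X1)) = qf (\<lambda>u. Shf u + S u) (?X0 - x)
        - qf (\<lambda>u. Shf u + S u) (?X1 - x) - qf (\<lambda>u. Shf u + S u) (?X1 - ?X0)" using I1 by simp
    have I2': "2 * ((Shg (?Y1 - ?Y0) + T (?Y1 - ?Y0)) \<bullet> (y - ?Y1)) = qf (\<lambda>u. Shg u + T u) (?Y0 - y)
        - qf (\<lambda>u. Shg u + T u) (?Y1 - y) - qf (\<lambda>u. Shg u + T u) (?Y1 - ?Y0)" using I2 by simp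
    note F1' = F1[unfolded c3 c1] and F2' = F2[unfolded c4 c2]
    have XP: "real_of_ereal (p ?X1) - real_of_ereal (p x) + gf x \<bullet> (?X1 - x)
       + 1/2 * (qf (\<lambda>u. Shf u + S u) (?X1 - x) - qf (\<lambda>u. Shf u + S u) (?X0 - x))
      \<le> zs k \<bullet> (?ax - ?aX1) + \<sigma> * ((?aX1 + (?bY0 - c)) \<bullet> (?ax - ?aX1))
       - 1/4 * qf Sf (?X1 - ?X0) - 1/2 * qf S (?X1 - ?X0)"
      using F1' E3 I1' q1 by (simp only: ring_distribs; linarith)
    have T1: "(Shf (?X1 - ?X0) + S (?X1 - ?X0)) \<bullet> (x - ?X1) = 1/2 * qf (\<lambda>u. Shf u + S u) (?X0 - x) - 1/2 * qf (\<lambda>u. Shf u + S u) (?X1 - x) - 1/2 * qf Shf (?X1 - ?X0) - 1/2 * qf S (?X1 - ?X0)"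
      using I1' q1 by (simp only: ring_distribs; linarith)
    have T2: "real_of_ereal (p ?X1) - real_of_ereal (p x) + gf x \<bullet> (?X1 - x) \<le> zs k \<bullet> (?ax - ?aX1) + \<sigma> * ((?aX1 + (?bY0 - c)) \<bullet> (?ax - ?aX1)) + (Shf (?X1 - ?X0) + S (?X1 - ?X0)) \<bullet> (x - ?X1) + 1/2 * qf Shf (?X1 - ?X0) - 1/4 * qf Sf (?X1 - ?X0)"
      using F1' E3 by (simp only: ring_distribs; linarith)
    have XP2: "real_of_ereal (p ?X1) - real_of_ereal (p x) + gf x \<bullet> (?X1 - x)
       + 1/2 * (qf (\<lambda>u. Shf u + S u) (?X1 - x) - qf (\<lambda>u. Shf u + S u) (?X0 - x))
      \<le> zs k \<bullet> (?ax - ?aX1) + \<sigma> * ((?aX1 + (?bY0 - c)) \<bullet> (?ax - ?aX1))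
       - 1/4 * qf Sf (?X1 - ?X0) - 1/2 * qf S (?X1 - ?X0)"
      using T1 T2 by (simp only: ring_distribs; linarith)
    have YP: "real_of_ereal (q ?Y1) - real_of_ereal (q y) + gg y \<bullet> (?Y1 - y)
       + 1/2 * (qf (\<lambda>u. Shg u + T u) (?Y1 - y) - qf (\<lambda>u. Shg u + T u) (?Y0 - y))
      \<le> zs k \<bullet> (?by - ?bY1) + \<sigma> * ((?bY1 + (?aX1 - c)) \<bullet> (?by - ?bY1))
       - 1/4 * qf Sg (?Y1 - ?Y0) - 1/2 * qf T (?Y1 - ?Y0)"
      using F2' E4 I2' q2 by (simp only: ring_distribs; linarith)
    show ?thesis unfolding phi1 phi0 sk gr rr
      using XP YP ZA by (simp only: ring_distribs; linarith)
  qed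
  have Breal: "\<Gamma>r k x y z + 1/2 * ((\<phi> (Suc k) x y z + (1 - \<alpha> * min \<tau> (1/\<tau>)) * \<sigma> * (norm (r (Suc k)))\<^sup>2 + \<alpha> * \<xi> (Suc k))
        - (\<phi> k x y z + (1 - \<alpha> * min \<tau> (1/\<tau>)) * \<sigma> * (norm (r k))\<^sup>2 + \<alpha> * \<xi> k))
      \<le> - 1/2 * (t \<alpha> (Suc k) + (- \<tau> + \<alpha> * min (1 + \<tau>) (1 + 1 / \<tau>)) * \<sigma> * (norm (r (Suc k)))\<^sup>2)"
    if px: "p x \<noteq> \<infinity>" and qy: "q y \<noteq> \<infinity>" and a0: "0 < \<alpha>" and a1: "\<alpha> \<le> 1"
      and k1: "1 \<le> k" and psdT: "psd_op (\<lambda>u. (1/2) *\<^sub>R Shg u + T u)" for k x y z \<alpha>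
  proof -
    obtain j where kj: "k = Suc j" using k1 by (cases k) auto
    let ?X1 = "xs (Suc (Suc j))" and ?X0 = "xs (Suc j)" and ?Y1 = "ys (Suc (Suc j))" and ?Y0 = "ys (Suc j)"
      and ?Ym = "ys j"
    let ?aX1 = "adjoint A (xs (Suc (Suc j)))" and ?aX0 = "adjoint A (xs (Suc j))"
      and ?bY0 = "adjoint B (ys (Suc j))" and ?bY1 = "adjoint B (ys (Suc (Suc j)))"
    let ?m0 = "min \<tau> (1/\<tau>)" and ?m1 = "min \<tau> (1 + \<tau> - \<tau>\<^sup>2)"
    let ?D = "?bY1 - ?bY0"
    note AR = Areal[OF px qy, of "Suc j" z]
    have r0': "r k = ?aX0 + ?bY0 - c" by (simp add: r_def kj)
    have Q1: "(norm (adjoint A (?X1 - ?X0)))\<^sup>2 \<le> 2 * (norm (?aX1 + ?bY0 - c))\<^sup>2 + 2 * (norm (r k))\<^sup>2"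
    proof -
      have "adjoint A (?X1 - ?X0) = (?aX1 + ?bY0 - c) - (?aX0 + ?bY0 - c)"
        using linear_diff[OF AL, of ?X1 ?X0] by simp
      thus ?thesis unfolding r0' using norm_diff_sq_le by metis
    qed
    note M1 = conjunct2[OF yvi[OF finq[of j], of "Suc j"]]
    note M2 = conjunct2[OF yvi[OF finq[of "Suc j"], of j]]
    have d1: "adjoint B (?Y0 - ?Y1) = ?bY0 - ?bY1" by (rule linear_diff[OF BL])
    have d2: "adjoint B (?Y1 - ?Y0) = ?bY1 - ?bY0" by (rule linear_diff[OF BL])
    note M1' = M1[unfolded d1 z_step[of j]] and M2' = M2[unfolded d2]
    note ZQ = zq[where aXo = ?aX0 and aXn = ?aX1 and bYo = ?bY0 and bYn = ?bY1 and c = c and Zm = "zs j"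
       and \<tau> = \<tau> and \<sigma> = \<sigma>]
    note G4 = grad4[OF g_bounds Sg_sa Sg_psd Shg_sa, where c = ?Y1 and b = ?Y0 and a = ?Ym]
    have gA: "gg ?Y0 \<bullet> (?Y0 - ?Y1) + gg ?Ym \<bullet> (?Y1 - ?Y0) = - ((gg ?Y0 - gg ?Ym) \<bullet> (?Y1 - ?Y0))"
      by (simp add: inner_diff_left inner_diff_right)
    have E7: "0 \<le> 1/2 * qf Shg ((?Y1 - ?Y0) - (?Y0 - ?Ym)) + qf T ((?Y1 - ?Y0) - (?Y0 - ?Ym))"
    proof -
      have "0 \<le> qf (\<lambda>u. (1/2) *\<^sub>R Shg u + T u) ((?Y1 - ?Y0) - (?Y0 - ?Ym))"
        using psdT by (simp add: psd_op_def qf_def)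
      thus ?thesis by (simp add: qf_hsum)
    qed
    have J1: "(Shg (?Y1 - ?Y0) + T (?Y1 - ?Y0)) \<bullet> (?Y0 - ?Y1) = - qf (\<lambda>u. Shg u + T u) (?Y1 - ?Y0)"
    proof -
      have e: "?Y0 - ?Y1 = - (?Y1 - ?Y0)" by simp
      show ?thesis unfolding qf_def e inner_minus_right by (simp add: inner_commute)
    qed
    have J2: "2 * ((Shg (?Y0 - ?Ym) + T (?Y0 - ?Ym)) \<bullet> (?Y1 - ?Y0)) = qf (\<lambda>u. Shg u + T u) (?Y1 - ?Y0)
        + qf (\<lambda>u. Shg u + T u) (?Y0 - ?Ym) - qf (\<lambda>u. Shg u + T u) ((?Y1 - ?Y0) - (?Y0 - ?Ym))"
    proof -
      have "qf (\<lambda>u. Shg u + T u) ((?Y1 - ?Y0) - (?Y0 - ?Ym)) = qf (\<lambda>u. Shg u + T u) (?Y1 - ?Y0)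
        + qf (\<lambda>u. Shg u + T u) (?Y0 - ?Ym) - 2 * ((\<lambda>u. Shg u + T u) (?Y1 - ?Y0) \<bullet> (?Y0 - ?Ym))"
        by (rule qf_diff[OF Gy_sa])
      moreover have "(\<lambda>u. Shg u + T u) (?Y1 - ?Y0) \<bullet> (?Y0 - ?Ym) = (\<lambda>u. Shg u + T u) (?Y0 - ?Ym) \<bullet> (?Y1 - ?Y0)"
        by (rule sa_swap2[OF Gy_sa])
      ultimately show ?thesis by simp
    qed
    have qe: "qf (\<lambda>u. Shg u + T u) ((?Y1 - ?Y0) - (?Y0 - ?Ym)) = qf Shg ((?Y1 - ?Y0) - (?Y0 - ?Ym)) + qf T ((?Y1 - ?Y0) - (?Y0 - ?Ym))"
      by (rule qf_sum)
    have xi1: "\<xi> (Suc k) = qf (\<lambda>u. Shg u + T u) (?Y1 - ?Y0)" by (simp add: \<xi>_def kj)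
    have xi0: "\<xi> k = qf (\<lambda>u. Shg u + T u) (?Y0 - ?Ym)" by (simp add: \<xi>_def kj)
    note NN = nn[where aXn = ?aX1 and bYo = ?bY0 and bYn = ?bY1 and c = c and \<sigma> = \<sigma>]
    note BR = bracket[OF tau_pos sigma_pos, where R = "?aX0 + ?bY0 - c" and D = ?D]
    have nD: "(norm (adjoint B (?Y1 - ?Y0)))\<^sup>2 = (norm ?D)\<^sup>2" using d2 by simp
    have r1: "r (Suc k) = ?aX1 + ?bY1 - c" by (simp add: r_def kj)
    have r0: "r k = ?aX0 + ?bY0 - c" by (simp add: r_def kj)
    have Q2: "\<xi> (Suc k) - \<xi> k - \<sigma> * (norm (?aX1 + ?bY0 - c))\<^sup>2 - (1 - ?m0) * \<sigma> * (norm (r k))\<^sup>2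
       + ?m1 * \<sigma> * (norm (adjoint B (?Y1 - ?Y0)))\<^sup>2 + \<sigma> * (norm (r (Suc k)))\<^sup>2 \<le> 0"
      unfolding xi1 xi0 nD r1 r0
      using M1' M2' ZQ G4 gA E7 J1 J2 qe NN BR by (simp only: ring_distribs; linarith)
    have teq: "t \<alpha> (Suc k) = s (Suc k) + (1 - \<alpha>) * \<sigma> / 2 * (norm (adjoint A (?X1 - ?X0)))\<^sup>2
        + ?m1 * \<alpha> * \<sigma> * (norm (adjoint B (?Y1 - ?Y0)))\<^sup>2"
      by (simp add: t_def s_def Hf_def Mg_def kj qf_hsum3[OF A_lin] qf_hsum3[OF B_lin] qf_hsum)
    have meq: "min (1 + \<tau>) (1 + 1 / \<tau>) = 1 + ?m0" by (simp add: min_def)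
    show ?thesis unfolding teq meq unfolding kj
      using final_b[OF AR Q1[unfolded kj] Q2[unfolded kj] a0 a1 sigma_pos] by simp
  qed
  show ?thesis
    apply (intro conjI allI impI)
    subgoal for k x y z
    proof (cases "p x = \<infinity> \<or> q y = \<infinity>")
      case True then show ?thesis using Ginf[OF True] by simp
    next
      case False then have px: "p x \<noteq> \<infinity>" and qy: "q y \<noteq> \<infinity>" by auto
      show ?thesis using Areal[OF px qy, of k z] unfolding Gfin[OF px qy] by simp
    qed
    subgoal for \<alpha> k x y z
    proof (cases "p x = \<infinity> \<or> q y = \<infinity>")
      case True then show ?thesis using Ginf[OF True] by (simp add: Let_def)
    next
      case False then have px: "p x \<noteq> \<infinity>" and qy: "q y \<noteq> \<infinity>" by auto
      assume psdT: "psd_op (\<lambda>u. (1/2) *\<^sub>R Shg u + T u)" and h: "0 < \<alpha> \<and> \<alpha> \<le> 1 \<and> 1 \<le> k"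
      show ?thesis using Breal[OF px qy _ _ _ psdT, of \<alpha> k z] h unfolding Gfin[OF px qy] Let_def by simp
    qed
    done
qed

end
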